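(* Let $P$ be a well-quasi-ordered poset. Then $\mathcal{J}(P)$, as a subspace of $\mathfrak{P}(P)$, is a compact scattered space, and its set of isolated points is exactly $\{\downarrow x: x\in P\}$, the set of principal ideals.
   Context: $\mathfrak{P}(P)$ is the power set of $P$ with the topology whose basic open sets are $O(F,G)=\{X\subseteq P: F\subseteq X,\ G\cap X=\emptyset\}$ for finite $F,G\subseteq P$ (the product topology on $2^P$). $\mathcal{J}(P)$ is the set of ideals of $P$: nonempty initial segments (closed downward) which are up-directed (any two elements have an upper bound in the set). $\downarrow x=\{y\in P: y\leq x\}$. A space is scattered if every nonempty subset has a point isolated in the induced topology. Well-quasi-ordered means well-founded with no infinite antichain. *)

theory Defs
  imports "HOL-Analysis.Analysis"
begin

definition basic_open :: "'a set \<Rightarrow> 'a set \<Rightarrow> 'a set \<Rightarrow> 'a set set" where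
  "basic_open P F G = {X. X \<subseteq> P \<and> F \<subseteq> X \<and> G \<inter> X = {}}"

definition powerset_topology :: "'a set \<Rightarrow> 'a set topology" where
  "powerset_topology P = topology_generated_by
     {basic_open P F G | F G. finite F \<and> F \<subseteq> P \<and> finite G \<and> G \<subseteq> P}"

definition ideals :: "'a::order set \<Rightarrow> 'a set set" where
  "ideals P = {I. I \<subseteq> P \<and> I \<noteq> {}
      \<and> (\<forall>x\<in>I. \<forall>y\<in>P. y \<le> x \<longrightarrow> y \<in> I)
      \<and> (\<forall>x\<in>I. \<forall>y\<in>I. \<exists>z\<in>I. x \<le> z \<and> y \<le> z)}"

definition down :: "'a::order set \<Rightarrow> 'a \<Rightarrow> 'a set" where
  "down P x = {y\<in>P. y \<le> x}"

definition wqo_on :: "'a::order set \<Rightarrow> bool" where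
  "wqo_on P \<longleftrightarrow> wf {(x, y). x \<in> P \<and> y \<in> P \<and> x < y}
     \<and> (\<forall>A \<subseteq> P. (\<forall>x\<in>A. \<forall>y\<in>A. x \<noteq> y \<longrightarrow> \<not> x \<le> y \<and> \<not> y \<le> x) \<longrightarrow> finite A)"

definition isolated_points :: "'b topology \<Rightarrow> 'b set" where
  "isolated_points X = {x \<in> topspace X. openin X {x}}"

definition scattered_space :: "'b topology \<Rightarrow> bool" where
  "scattered_space X \<longleftrightarrow>
     (\<forall>S \<subseteq> topspace X. S \<noteq> {} \<longrightarrow> (\<exists>x\<in>S. openin (subtopology X S) {x}))"

end

theory Submission
  imports Defs
begin

definition dset :: "'a::order set \<Rightarrow> 'a set \<Rightarrow> bool" where
  "dset P D \<longleftrightarrow> D \<subseteq> P \<and> (\<forall>x\<in>D. \<forall>y\<in>P. y \<le> x \<longrightarrow> y \<in> D)"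

lemma topspace_pt: "topspace (powerset_topology P) = Pow P"
proof -
  let ?B = "{basic_open P F G | F G. finite F \<and> F \<subseteq> P \<and> finite G \<and> G \<subseteq> P}"
  have "basic_open P {} {} \<in> ?B" by (rule CollectI, rule exI[of _ "{}"], rule exI[of _ "{}"]) simp
  moreover have "basic_open P {} {} = Pow P" by (auto simp: basic_open_def)
  moreover have "\<forall>B\<in>?B. B \<subseteq> Pow P" by (auto simp: basic_open_def)
  ultimately have "\<Union>?B = Pow P" by blast
  then show ?thesis unfolding powerset_topology_def topology_generated_by_topspace .
qed

lemma basic_open_openin:
  assumes "finite F" "F \<subseteq> P" "finite G" "G \<subseteq> P"
  shows "openin (powerset_topology P) (basic_open P F G)"
  unfolding powerset_topology_def
  by (rule topology_generated_by_Basis, rule CollectI, rule exI[of _ F], rule exI[of _ G]) (simp add: assms)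

lemma open_basic_nbhd:
  assumes "openin (powerset_topology P) U" "X \<in> U"
  shows "\<exists>F G. finite F \<and> F \<subseteq> P \<and> finite G \<and> G \<subseteq> P \<and> X \<in> basic_open P F G \<and> basic_open P F G \<subseteq> U"
proof -
  have "generate_topology_on {basic_open P F G | F G. finite F \<and> F \<subseteq> P \<and> finite G \<and> G \<subseteq> P} U"
    using assms(1) unfolding powerset_topology_def by (rule openin_topology_generated_by)
  then show ?thesis using assms(2)
  proof (induction arbitrary: X)
    case Empty then show ?case by simp
  next
    case (Int a b)
    have Xa: "X \<in> a" and Xb: "X \<in> b" using Int.prems by auto
    obtain F1 G1 where h1: "finite F1" "F1 \<subseteq> P" "finite G1" "G1 \<subseteq> P" "X \<in> basic_open P F1 G1"
       "basic_open P F1 G1 \<subseteq> a" using Int.IH(1)[OF Xa] by blast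
    obtain F2 G2 where h2: "finite F2" "F2 \<subseteq> P" "finite G2" "G2 \<subseteq> P" "X \<in> basic_open P F2 G2"
       "basic_open P F2 G2 \<subseteq> b" using Int.IH(2)[OF Xb] by blast
    have eq: "basic_open P (F1 \<union> F2) (G1 \<union> G2) = basic_open P F1 G1 \<inter> basic_open P F2 G2"
      by (auto simp: basic_open_def)
    have "finite (F1 \<union> F2) \<and> F1 \<union> F2 \<subseteq> P \<and> finite (G1 \<union> G2) \<and> G1 \<union> G2 \<subseteq> P
       \<and> X \<in> basic_open P (F1 \<union> F2) (G1 \<union> G2) \<and> basic_open P (F1 \<union> F2) (G1 \<union> G2) \<subseteq> a \<inter> b"
      unfolding eq using h1 h2 by blast
    then show ?case by blast
  next
    case (UN K)
    then obtain k where k: "k \<in> K" "X \<in> k" by blast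
    obtain F G where "finite F \<and> F \<subseteq> P \<and> finite G \<and> G \<subseteq> P \<and> X \<in> basic_open P F G \<and> basic_open P F G \<subseteq> k"
      using UN.IH[OF k] by blast
    then show ?case using k by (intro exI[of _ F] exI[of _ G]) auto
  next
    case (Basis s)
    then obtain F G where "s = basic_open P F G" "finite F" "F \<subseteq> P" "finite G" "G \<subseteq> P" by blast
    then show ?case using Basis.prems by (intro exI[of _ F] exI[of _ G]) simp
  qed
qed

lemma wqo_min:
  assumes "wqo_on P" "U \<subseteq> P"
  shows "finite {g\<in>U. \<not>(\<exists>u\<in>U. u < g)} \<and> (\<forall>u\<in>U. \<exists>g\<in>{g\<in>U. \<not>(\<exists>u\<in>U. u < g)}. g \<le> u)"
proof
  let ?G = "{g\<in>U. \<not>(\<exists>u\<in>U. u < g)}"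
  have "?G \<subseteq> P" using assms by auto
  moreover have "\<forall>x\<in>?G. \<forall>y\<in>?G. x \<noteq> y \<longrightarrow> \<not> x \<le> y \<and> \<not> y \<le> x"
    by (auto simp: order.order_iff_strict)
  ultimately show "finite ?G" using assms(1) unfolding wqo_on_def by blast
next
  let ?G = "{g\<in>U. \<not>(\<exists>u\<in>U. u < g)}"
  have wf: "wf {(x, y). x \<in> P \<and> y \<in> P \<and> x < y}" using assms(1) unfolding wqo_on_def by blast
  show "\<forall>u\<in>U. \<exists>g\<in>?G. g \<le> u"
  proof
    fix u assume u: "u \<in> U"
    obtain v where v: "v \<in> {v\<in>U. v \<le> u}" "\<forall>w. (w, v) \<in> {(x, y). x \<in> P \<and> y \<in> P \<and> x < y} \<longrightarrow> w \<notin> {v\<in>U. v \<le> u}"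
      using wf_eq_minimal[THEN iffD1, OF wf, rule_format, of u "{v\<in>U. v \<le> u}"] u by blast
    have "v \<in> ?G"
    proof (auto)
      show "v \<in> U" using v by auto
      fix w assume "w \<in> U" "w < v"
      then show False using v assms(2) by auto
    qed
    then show "\<exists>g\<in>?G. g \<le> u" using v by blast
  qed
qed

lemma wf_dset:
  assumes "wqo_on P"
  shows "wf {(D, E). dset P D \<and> dset P E \<and> D \<subset> E}"
proof (rule ccontr)
  assume "\<not> ?thesis"
  then obtain f where f: "\<And>i. (f (Suc i), f i) \<in> {(D, E). dset P D \<and> dset P E \<and> D \<subset> E}"
    unfolding wf_iff_no_infinite_down_chain by blast
  have step: "\<And>i. f (Suc i) \<subseteq> f i" using f by blast
  have mono: "\<And>i j. i \<le> j \<Longrightarrow> f j \<subseteq> f i"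
    by (rule lift_Suc_antimono_le[of f, OF step])
  define U where "U = (\<Union>i. P - f i)"
  have UP: "U \<subseteq> P" unfolding U_def by auto
  define G where "G = {g\<in>U. \<not>(\<exists>u\<in>U. u < g)}"
  have fin: "finite G" and cov: "\<forall>u\<in>U. \<exists>g\<in>G. g \<le> u"
    using wqo_min[OF assms UP] unfolding G_def by auto
  have "\<forall>g\<in>G. \<exists>i. g \<notin> f i" unfolding G_def U_def by auto
  then have ex: "\<And>g. g \<in> G \<Longrightarrow> \<exists>i. g \<notin> f i" by blast
  define idx where "idx g = (SOME i. g \<notin> f i)" for g
  have idx: "\<And>g. g \<in> G \<Longrightarrow> g \<notin> f (idx g)"
    unfolding idx_def by (rule someI_ex[OF ex])
  define N where "N = Max (insert 0 (idx ` G))"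
  have le: "\<And>g. g \<in> G \<Longrightarrow> idx g \<le> N"
    unfolding N_def by (rule Max_ge) (use fin in auto)
  have notin: "g \<notin> f N" if g: "g \<in> G" for g
  proof
    assume "g \<in> f N"
    then have "g \<in> f (idx g)" using mono[OF le[OF g(1)]] by blast
    then show False using idx[OF g(1)] by blast
  qed
  from f[of N] obtain y where y: "y \<in> f N" "y \<notin> f (Suc N)" and dN: "dset P (f N)" by auto
  then have "y \<in> P" by (auto simp: dset_def)
  then have "y \<in> U" using y unfolding U_def by auto
  then obtain g where g: "g \<in> G" "g \<le> y" using cov by auto
  then have "g \<in> P" using UP unfolding G_def by auto
  then have "g \<in> f N" using dN y g unfolding dset_def by blast
  then show False using notin g by auto
qed

lemma ideal_dset: "I \<in> ideals P \<Longrightarrow> dset P I"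
  by (auto simp: ideals_def dset_def)

lemma compact_ideals:
  assumes "wqo_on P"
  shows "compactin (powerset_topology P) (ideals P)"
  unfolding compactin_def
proof (intro conjI allI impI)
  show "ideals P \<subseteq> topspace (powerset_topology P)"
    by (auto simp: topspace_pt ideals_def)
  fix \<U> assume A: "(\<forall>B\<in>\<U>. openin (powerset_topology P) B) \<and> ideals P \<subseteq> \<Union>\<U>"
  define good where "good D \<longleftrightarrow> (\<exists>\<V>. finite \<V> \<and> \<V> \<subseteq> \<U> \<and> {I\<in>ideals P. I \<subseteq> D} \<subseteq> \<Union>\<V>)" for D
  have "dset P D \<longrightarrow> good D" for D
  proof (induction D rule: wf_induct_rule[OF wf_dset[OF assms]])
    case (1 D)
    show ?case
    proof
      assume dD: "dset P D"
      have IH: "\<And>E. dset P E \<Longrightarrow> E \<subset> D \<Longrightarrow> good E" using 1 dD by auto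
      have sub: "\<And>f. f \<in> D \<Longrightarrow> dset P (D - {z. f \<le> z}) \<and> D - {z. f \<le> z} \<subset> D"
        using dD unfolding dset_def by (auto intro: order_trans)
      show "good D"
      proof (cases "D \<in> ideals P")
        case True
        then obtain U where U: "U \<in> \<U>" "D \<in> U" using A by blast
        then obtain F G where FG: "finite F" "F \<subseteq> P" "finite G" "G \<subseteq> P" "D \<in> basic_open P F G"
          "basic_open P F G \<subseteq> U"
          using open_basic_nbhd[of P U D] A by blast
        have "\<forall>f\<in>F. good (D - {z. f \<le> z})"
          using IH sub FG(5) by (auto simp: basic_open_def)
        then obtain V where V: "\<And>f. f \<in> F \<Longrightarrow> finite (V f) \<and> V f \<subseteq> \<U> \<and>
            {I\<in>ideals P. I \<subseteq> D - {z. f \<le> z}} \<subseteq> \<Union>(V f)"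
          unfolding good_def by metis
        show ?thesis unfolding good_def
        proof (intro exI[of _ "insert U (\<Union>f\<in>F. V f)"] conjI)
          show "finite (insert U (\<Union>f\<in>F. V f))" using V FG(1) by auto
          show "insert U (\<Union>f\<in>F. V f) \<subseteq> \<U>" using V U by auto
          show "{I\<in>ideals P. I \<subseteq> D} \<subseteq> \<Union>(insert U (\<Union>f\<in>F. V f))"
          proof
            fix I assume I: "I \<in> {I\<in>ideals P. I \<subseteq> D}"
            show "I \<in> \<Union>(insert U (\<Union>f\<in>F. V f))"
            proof (cases "F \<subseteq> I")
              case True
              then have "I \<in> basic_open P F G"
                using I FG(5) by (auto simp: basic_open_def ideals_def)
              then show ?thesis using FG(6) by auto
            next
              case False
              then obtain f where f: "f \<in> F" "f \<notin> I" by auto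
              have "I \<subseteq> D - {z. f \<le> z}"
                using I f FG(2) by (auto simp: ideals_def)
              then show ?thesis using V[OF f(1)] I f(1) by blast
            qed
          qed
        qed
      next
        case False
        show ?thesis
        proof (cases "D = {}")
          case True
          then show ?thesis unfolding good_def by (intro exI[of _ "{}"]) (auto simp: ideals_def)
        next
          case ne: False
          have nd: "\<not> (\<forall>x\<in>D. \<forall>y\<in>D. \<exists>z\<in>D. x \<le> z \<and> y \<le> z)"
          proof
            assume "\<forall>x\<in>D. \<forall>y\<in>D. \<exists>z\<in>D. x \<le> z \<and> y \<le> z"
            then have "D \<in> ideals P" using dD ne unfolding ideals_def dset_def by simp
            then show False using False by simp
          qed
          then obtain x y where xy: "x \<in> D" "y \<in> D" "\<not>(\<exists>z\<in>D. x \<le> z \<and> y \<le> z)"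
            by blast
          have "good (D - {z. x \<le> z})" using sub[OF xy(1)] by (intro IH) auto
          then obtain V1 where V1: "finite V1" "V1 \<subseteq> \<U>" "{I\<in>ideals P. I \<subseteq> D - {z. x \<le> z}} \<subseteq> \<Union>V1"
            unfolding good_def by blast
          have "good (D - {z. y \<le> z})" using sub[OF xy(2)] by (intro IH) auto
          then obtain V2 where V2: "finite V2" "V2 \<subseteq> \<U>" "{I\<in>ideals P. I \<subseteq> D - {z. y \<le> z}} \<subseteq> \<Union>V2"
            unfolding good_def by blast
          show ?thesis unfolding good_def
          proof (intro exI[of _ "V1 \<union> V2"] conjI)
            show "finite (V1 \<union> V2)" "V1 \<union> V2 \<subseteq> \<U>" using V1(1,2) V2(1,2) by simp_all
            show "{I\<in>ideals P. I \<subseteq> D} \<subseteq> \<Union>(V1 \<union> V2)"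
            proof
              fix I assume I: "I \<in> {I\<in>ideals P. I \<subseteq> D}"
              show "I \<in> \<Union>(V1 \<union> V2)"
              proof (cases "I \<subseteq> D - {z. x \<le> z} \<or> I \<subseteq> D - {z. y \<le> z}")
                case True
                then show ?thesis using I V1 V2 by blast
              next
                case False
                have ID: "I \<subseteq> D" using I by simp
                obtain a where a: "a \<in> I" "x \<le> a" using False ID by blast
                obtain b where b: "b \<in> I" "y \<le> b" using False ID by blast
                have dir: "\<forall>a\<in>I. \<forall>b\<in>I. \<exists>c\<in>I. a \<le> c \<and> b \<le> c" using I by (simp add: ideals_def)
                obtain c where "c \<in> I" "a \<le> c" "b \<le> c" using dir a b by blast
                then show ?thesis using xy a b ID by (meson order_trans subsetD)
              qed
            qed
          qed
        qed
      qed
    qed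
  qed
  moreover have "dset P P" by (auto simp: dset_def)
  ultimately have "good P" by blast
  moreover have "{I\<in>ideals P. I \<subseteq> P} = ideals P" by (auto simp: ideals_def)
  ultimately show "\<exists>\<F>. finite \<F> \<and> \<F> \<subseteq> \<U> \<and> ideals P \<subseteq> \<Union>\<F>" unfolding good_def by auto
qed

lemma ideal_ub:
  assumes "I \<in> ideals P" "finite F" "F \<subseteq> I"
  shows "\<exists>u\<in>I. \<forall>f\<in>F. f \<le> u"
  using assms(2,3)
proof (induction F rule: finite_induct)
  case empty then show ?case using assms(1) by (auto simp: ideals_def)
next
  case (insert a F)
  then obtain u where "u \<in> I" "\<forall>f\<in>F. f \<le> u" by auto
  moreover obtain z where "z \<in> I" "a \<le> z" "u \<le> z"
    using assms(1) insert.prems calculation(1) unfolding ideals_def by (simp; meson)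
  ultimately have "z \<in> I \<and> (\<forall>f\<in>insert a F. f \<le> z)" using order_trans by auto
  then show ?case by blast
qed

lemma down_ideal: "x \<in> P \<Longrightarrow> down P x \<in> ideals P"
  by (auto simp: down_def ideals_def intro: order_trans)

theorem proposition3p4:
  fixes P :: "'a::order set"
  assumes "wqo_on P"
  shows "compact_space (subtopology (powerset_topology P) (ideals P))
       \<and> scattered_space (subtopology (powerset_topology P) (ideals P))
       \<and> isolated_points (subtopology (powerset_topology P) (ideals P)) = {down P x | x. x \<in> P}"
proof (intro conjI)
  have JP: "ideals P \<subseteq> Pow P" by (auto simp: ideals_def)
  have ts: "topspace (subtopology (powerset_topology P) (ideals P)) = ideals P"
    using JP by (simp add: topspace_pt inf.absorb2)
  show "compact_space (subtopology (powerset_topology P) (ideals P))"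
    unfolding compact_space_def ts compactin_subtopology using compact_ideals[OF assms] by simp
  show "scattered_space (subtopology (powerset_topology P) (ideals P))"
    unfolding scattered_space_def ts
  proof (intro allI impI)
    fix S assume S: "S \<subseteq> ideals P" "S \<noteq> {}"
    then obtain I where I: "I \<in> S" "\<forall>K. (K, I) \<in> {(D, E). dset P D \<and> dset P E \<and> D \<subset> E} \<longrightarrow> K \<notin> S"
      using wf_eq_minimal[THEN iffD1, OF wf_dset[OF assms], rule_format, of _ S] by blast
    have IJ: "I \<in> ideals P" using I S by auto
    define G where "G = {g\<in>P - I. \<not>(\<exists>u\<in>P - I. u < g)}"
    have fin: "finite G" and cov: "\<forall>u\<in>P - I. \<exists>g\<in>G. g \<le> u"
      using wqo_min[OF assms, of "P - I"] unfolding G_def by auto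
    have GP: "G \<subseteq> P" unfolding G_def by auto
    have "basic_open P {} G \<inter> (ideals P \<inter> S) = {I}"
    proof
      show "{I} \<subseteq> basic_open P {} G \<inter> (ideals P \<inter> S)"
        using IJ I G_def by (auto simp: basic_open_def ideals_def)
      show "basic_open P {} G \<inter> (ideals P \<inter> S) \<subseteq> {I}"
      proof
        fix K assume K: "K \<in> basic_open P {} G \<inter> (ideals P \<inter> S)"
        have "K \<subseteq> I"
        proof
          fix z assume z: "z \<in> K"
          show "z \<in> I"
          proof (rule ccontr)
            assume "z \<notin> I"
            moreover have "z \<in> P" using K z by (auto simp: ideals_def)
            ultimately obtain g where "g \<in> G" "g \<le> z" using cov by auto
            then have "g \<in> K" using K z GP unfolding ideals_def by blast
            then show False using K \<open>g \<in> G\<close> by (auto simp: basic_open_def)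
          qed
        qed
        moreover have "\<not> K \<subset> I" using I K ideal_dset[OF IJ] ideal_dset[of K P] by auto
        ultimately show "K \<in> {I}" by auto
      qed
    qed
    moreover have "openin (powerset_topology P) (basic_open P {} G)"
      by (rule basic_open_openin) (use fin GP in auto)
    ultimately have "openin (subtopology (powerset_topology P) (ideals P \<inter> S)) {I}"
      unfolding openin_subtopology by (intro exI[of _ "basic_open P {} G"]) auto
    then show "\<exists>x\<in>S. openin (subtopology (subtopology (powerset_topology P) (ideals P)) S) {x}"
      using I by (auto simp: subtopology_subtopology)
  qed
  show "isolated_points (subtopology (powerset_topology P) (ideals P)) = {down P x | x. x \<in> P}"
    unfolding isolated_points_def ts
  proof
    show "{x \<in> ideals P. openin (subtopology (powerset_topology P) (ideals P)) {x}} \<subseteq> {down P x |x. x \<in> P}"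
    proof
      fix I assume "I \<in> {x \<in> ideals P. openin (subtopology (powerset_topology P) (ideals P)) {x}}"
      then obtain T where IJ: "I \<in> ideals P" and T: "openin (powerset_topology P) T" "{I} = T \<inter> ideals P"
        unfolding openin_subtopology by auto
      then obtain F G where FG: "finite F" "F \<subseteq> P" "finite G" "G \<subseteq> P" "I \<in> basic_open P F G"
          "basic_open P F G \<subseteq> T"
        using open_basic_nbhd[of P T I] by blast
      have "F \<subseteq> I" using FG(5) by (auto simp: basic_open_def)
      then obtain u where u: "u \<in> I" "\<forall>f\<in>F. f \<le> u" using ideal_ub[OF IJ FG(1)] by blast
      have uP: "u \<in> P" using u IJ by (auto simp: ideals_def)
      have sub: "down P u \<subseteq> I" using u IJ by (auto simp: down_def ideals_def)
      have "down P u \<in> basic_open P F G"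
        using sub FG(2,5) u by (auto simp: basic_open_def down_def)
      then have "down P u \<in> T \<inter> ideals P" using FG(6) down_ideal[OF uP] by auto
      then have "down P u = I" using T by auto
      then show "I \<in> {down P x |x. x \<in> P}" using uP by auto
    qed
    show "{down P x |x. x \<in> P} \<subseteq> {x \<in> ideals P. openin (subtopology (powerset_topology P) (ideals P)) {x}}"
    proof
      fix D assume "D \<in> {down P x |x. x \<in> P}"
      then obtain x where x: "x \<in> P" "D = down P x" by auto
      define G where "G = {g\<in>{z\<in>P. x < z}. \<not>(\<exists>u\<in>{z\<in>P. x < z}. u < g)}"
      have fin: "finite G" and cov: "\<forall>u\<in>{z\<in>P. x < z}. \<exists>g\<in>G. g \<le> u"
        using wqo_min[OF assms, of "{z\<in>P. x < z}"] unfolding G_def by auto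
      have GP: "G \<subseteq> P" unfolding G_def by auto
      have "basic_open P {x} G \<inter> ideals P = {D}"
      proof
        show "{D} \<subseteq> basic_open P {x} G \<inter> ideals P"
          using x down_ideal[OF x(1)] G_def by (auto simp: basic_open_def down_def)
        show "basic_open P {x} G \<inter> ideals P \<subseteq> {D}"
        proof
          fix K assume K: "K \<in> basic_open P {x} G \<inter> ideals P"
          then have xK: "x \<in> K" and KJ: "K \<in> ideals P" and GK: "G \<inter> K = {}"
            by (auto simp: basic_open_def)
          have "K \<subseteq> D"
          proof
            fix y assume y: "y \<in> K"
            have dir: "\<forall>a\<in>K. \<forall>b\<in>K. \<exists>c\<in>K. a \<le> c \<and> b \<le> c" using KJ by (simp add: ideals_def)
            obtain z where z: "z \<in> K" "x \<le> z" "y \<le> z" using dir xK y by blast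
            have "z = x"
            proof (rule ccontr)
              assume "z \<noteq> x"
              then have "z \<in> {z\<in>P. x < z}" using z KJ by (auto simp: ideals_def)
              then obtain g where "g \<in> G" "g \<le> z" using cov by auto
              then have "g \<in> K" using KJ z GP unfolding ideals_def by blast
              then show False using GK \<open>g \<in> G\<close> by auto
            qed
            then show "y \<in> D" using x y z KJ by (auto simp: down_def ideals_def)
          qed
          moreover have "D \<subseteq> K" using x xK KJ by (auto simp: down_def ideals_def)
          ultimately show "K \<in> {D}" by auto
        qed
      qed
      moreover have "openin (powerset_topology P) (basic_open P {x} G)"
        by (rule basic_open_openin) (use fin GP x in auto)
      ultimately have "openin (subtopology (powerset_topology P) (ideals P)) {D}"
        unfolding openin_subtopology by (intro exI[of _ "basic_open P {x} G"]) auto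
      then show "D \<in> {x \<in> ideals P. openin (subtopology (powerset_topology P) (ideals P)) {x}}"
        using x down_ideal by auto
    qed
  qed
qed

end
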